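(* Consider the distributed quantized weight-balancing algorithm described in the context on a strongly connected digraph, with step-size $\gamma(k)=2^{-n}$ for $2^n-1\le k\le 2^{n+1}-2$. For every $k\in\mathbb{Z}_+$: if the decreasing event $\mathcal{D}_k$ occurs then $\Vert\boldsymbol{\epsilon}(k+1)\Vert_1\le\Vert\boldsymbol{\epsilon}(k)\Vert_1-2\gamma(k)$, and otherwise $\Vert\boldsymbol{\epsilon}(k+1)\Vert_1=\Vert\boldsymbol{\epsilon}(k)\Vert_1$.
   Context: $\mathcal{G}=(\mathcal{V},\mathcal{E})$, $\mathcal{V}=\{1,\dots,N\}$, no self-loops; $\mathcal{N}_i^-=\{j:(j,i)\in\mathcal{E}\}$, $\mathcal{N}_i^+=\{j:(i,j)\in\mathcal{E}\}$, $d_i^+=|\mathcal{N}_i^+|$. Algorithm: $a_{ij}(0)=1$ if $j\in\mathcal{N}_i^-$ and $0$ otherwise; $b_i(k)=\sum_{j\in\mathcal{N}_i^-}a_{ij}(k)-\sum_{j\in\mathcal{N}_i^+}a_{ji}(k)$; $n_i(k)=1$ if $b_i(k)\ge d_i^+\gamma(k)$, else $0$; $a_{ij}(k+1)=a_{ij}(k)+n_j(k)\gamma(k)$ for $j\in\mathcal{N}_i^-$. $\boldsymbol{\epsilon}(k)=(|b_i(k)|)_{i=1}^N$. The decreasing event $\mathcal{D}_k$: there exist $i\in\mathcal{V}$ and $j\in\mathcal{N}_i^+$ with $n_i(k)>0$ and $b_j(k)<0$. *)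

theory Defs
  imports Complex_Main
begin

(* Edges are pairs (j,i) meaning j -> i. The weight a_ij (j in N_i^-) is stored
   as w (j,i), i.e. indexed by the edge (source, target). *)

definition in_nbrs :: "(nat \<times> nat) set \<Rightarrow> nat \<Rightarrow> nat set" where
  "in_nbrs E i = {j. (j, i) \<in> E}"

definition out_nbrs :: "(nat \<times> nat) set \<Rightarrow> nat \<Rightarrow> nat set" where
  "out_nbrs E i = {j. (i, j) \<in> E}"

definition out_deg :: "(nat \<times> nat) set \<Rightarrow> nat \<Rightarrow> nat" where
  "out_deg E i = card (out_nbrs E i)"

definition gamma :: "nat \<Rightarrow> real" where
  "gamma k = (1/2) ^ (THE n. 2^n - 1 \<le> k \<and> k \<le> 2^(n+1) - 2)"

definition imbalance :: "(nat \<times> nat) set \<Rightarrow> (nat \<times> nat \<Rightarrow> real) \<Rightarrow> nat \<Rightarrow> real" where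
  "imbalance E w i = (\<Sum>j\<in>in_nbrs E i. w (j, i)) - (\<Sum>j\<in>out_nbrs E i. w (i, j))"

definition fires :: "(nat \<times> nat) set \<Rightarrow> (nat \<times> nat \<Rightarrow> real) \<Rightarrow> nat \<Rightarrow> nat \<Rightarrow> bool" where
  "fires E w k i \<longleftrightarrow> imbalance E w i \<ge> real (out_deg E i) * gamma k"

primrec wts :: "(nat \<times> nat) set \<Rightarrow> nat \<Rightarrow> (nat \<times> nat \<Rightarrow> real)" where
  "wts E 0 = (\<lambda>e. if e \<in> E then 1 else 0)"
| "wts E (Suc k) = (\<lambda>(j, i). if (j, i) \<in> E then
      wts E k (j, i) + (if fires E (wts E k) k j then gamma k else 0) else 0)"

definition bk :: "(nat \<times> nat) set \<Rightarrow> nat \<Rightarrow> nat \<Rightarrow> real" where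
  "bk E k i = imbalance E (wts E k) i"

definition nk :: "(nat \<times> nat) set \<Rightarrow> nat \<Rightarrow> nat \<Rightarrow> real" where
  "nk E k i = (if fires E (wts E k) k i then 1 else 0)"

definition eps_norm1 :: "nat \<Rightarrow> (nat \<times> nat) set \<Rightarrow> nat \<Rightarrow> real" where
  "eps_norm1 N E k = (\<Sum>i\<in>{1..N}. \<bar>bk E k i\<bar>)"

definition dec_event :: "nat \<Rightarrow> (nat \<times> nat) set \<Rightarrow> nat \<Rightarrow> bool" where
  "dec_event N E k \<longleftrightarrow> (\<exists>i\<in>{1..N}. \<exists>j\<in>out_nbrs E i. nk E k i > 0 \<and> bk E k j < 0)"

definition strongly_connected :: "nat \<Rightarrow> (nat \<times> nat) set \<Rightarrow> bool" where
  "strongly_connected N E \<longleftrightarrow> (\<forall>i\<in>{1..N}. \<forall>j\<in>{1..N}. (i, j) \<in> E\<^sup>*)"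

end

theory Submission
  imports Defs
begin

lemma ex_lvl: "\<exists>m::nat. 2^m \<le> (k::nat)+1 \<and> k+1 < 2^(m+1)"
proof (induction k)
  case 0 show ?case by (rule exI[of _ 0]) simp
next
  case (Suc k)
  then obtain m where m: "2^m \<le> k+1" "k+1 < (2::nat)^(m+1)" by blast
  show ?case
  proof (cases "k+2 < (2::nat)^(m+1)")
    case True with m show ?thesis by (intro exI[of _ m]) auto
  next
    case False
    then have "k+2 = (2::nat)^(m+1)" using m by linarith
    then show ?thesis by (intro exI[of _ "m+1"]) auto
  qed
qed

lemma lvl_iff: "(2^m - 1 \<le> k \<and> k \<le> 2^(m+1) - 2) \<longleftrightarrow> (2^m \<le> k+1 \<and> k+1 < (2::nat)^(m+1))"
proof -
  have "(1::nat) \<le> 2^m" by simp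
  moreover have "(2::nat) \<le> 2^(m+1)" by simp
  ultimately show ?thesis by linarith
qed

lemma lvl_uniq:
  assumes "2^m \<le> k+1" "k+1 < (2::nat)^(m+1)" "2^m' \<le> k'+1" "k'+1 < (2::nat)^(m'+1)" "k' \<le> k"
  shows "m' \<le> m"
proof (rule ccontr)
  assume "\<not> m' \<le> m"
  then have "m+1 \<le> m'" by simp
  then have "(2::nat)^(m+1) \<le> 2^m'" by (rule power_increasing) simp
  with assms show False by linarith
qed

lemma gamma_eq: "\<exists>m. 2^m \<le> k+1 \<and> k+1 < (2::nat)^(m+1) \<and> gamma k = (1/2)^m"
proof -
  obtain m where m: "2^m \<le> k+1" "k+1 < (2::nat)^(m+1)" using ex_lvl by blast
  have "(THE n. 2^n - 1 \<le> k \<and> k \<le> 2^(n+1) - 2) = m"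
  proof (rule the_equality)
    show "2^m - 1 \<le> k \<and> k \<le> 2^(m+1) - 2" using m lvl_iff by blast
  next
    fix n assume "2^n - 1 \<le> k \<and> k \<le> 2^(n+1) - 2"
    then have n: "2^n \<le> k+1" "k+1 < (2::nat)^(n+1)" using lvl_iff by blast+
    show "n = m" using lvl_uniq[OF m n] lvl_uniq[OF n m] by simp
  qed
  then show ?thesis using m unfolding gamma_def by auto
qed

lemma gamma_pos: "gamma k > 0"
  using gamma_eq[of k] by auto

lemma gamma_mult: assumes "k' \<le> k" shows "\<exists>z::int. gamma k' = of_int z * gamma k"
proof -
  obtain m where m: "2^m \<le> k+1" "k+1 < (2::nat)^(m+1)" "gamma k = (1/2)^m" using gamma_eq by blast
  obtain m' where m': "2^m' \<le> k'+1" "k'+1 < (2::nat)^(m'+1)" "gamma k' = (1/2)^m'" using gamma_eq by blast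
  have le: "m' \<le> m" using lvl_uniq[OF m(1,2) m'(1,2) assms] .
  have "(1/2::real)^m' = 2^(m-m') * (1/2)^m"
  proof -
    have "(1/2::real)^m = (1/2)^m' * (1/2)^(m-m')" using le by (simp add: power_add[symmetric])
    then show ?thesis by (simp add: power_one_over)
  qed
  then show ?thesis using m m' by (intro exI[of _ "2^(m-m')"]) simp
qed

lemma wts_mult: "\<exists>z::int. wts E k e = of_int z * gamma k"
proof (induction k arbitrary: e)
  case 0
  obtain m where m: "2^m \<le> (1::nat)" "gamma 0 = (1/2)^m" using gamma_eq[of 0] by auto
  have "m = 0"
  proof (rule ccontr)
    assume "m \<noteq> 0"
    then have "(2::nat)^1 \<le> 2^m" by (intro power_increasing) auto
    with m(1) show False by simp
  qed
  then have "gamma 0 = 1" using m by simp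
  then show ?case by (intro exI[of _ "if e \<in> E then 1 else 0"]) simp
next
  case (Suc k)
  obtain d where d: "gamma k = of_int d * gamma (Suc k)" using gamma_mult[of k "Suc k"] by auto
  obtain a b where e: "e = (a, b)" by fastforce
  obtain z where z: "wts E k (a,b) = of_int z * gamma k" using Suc by blast
  show ?case
    using z d unfolding e
    by (intro exI[of _ "if (a,b) \<in> E then z*d + (if fires E (wts E k) k a then d else 0) else 0"])
       (simp add: algebra_simps)
qed

lemma bk_mult: "\<exists>z::int. bk E k i = of_int z * gamma k"
proof -
  have s: "\<exists>z::int. (\<Sum>j\<in>A. wts E k (f j)) = of_int z * gamma k" for A :: "nat set" and f
  proof (induction A rule: infinite_finite_induct)
    case (insert x F)
    obtain z where "(\<Sum>j\<in>F. wts E k (f j)) = of_int z * gamma k" using insert by blast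
    moreover obtain y where "wts E k (f x) = of_int y * gamma k" using wts_mult by blast
    ultimately show ?case using insert by (intro exI[of _ "y+z"]) (simp add: algebra_simps)
  qed auto
  obtain z1 where "(\<Sum>j\<in>in_nbrs E i. wts E k (j, i)) = of_int z1 * gamma k" using s[where A="in_nbrs E i" and f="\<lambda>j. (j,i)"] by blast
  moreover obtain z2 where "(\<Sum>j\<in>out_nbrs E i. wts E k (i, j)) = of_int z2 * gamma k" using s[where A="out_nbrs E i" and f="\<lambda>j. (i,j)"] by blast
  ultimately show ?thesis unfolding bk_def imbalance_def
    by (intro exI[of _ "z1 - z2"]) (simp add: algebra_simps)
qed

lemma bk_neg: assumes "bk E k i < 0" shows "bk E k i \<le> - gamma k"
proof -
  obtain z where z: "bk E k i = of_int z * gamma k" using bk_mult by blast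
  have g: "gamma k > 0" by (rule gamma_pos)
  with z assms have "z < 0" by (simp add: mult_less_0_iff)
  then have "of_int z \<le> (-1::real)" by simp
  then have "of_int z * gamma k \<le> -1 * gamma k" using g by (intro mult_right_mono) auto
  with z show ?thesis by simp
qed

theorem lemma1:
  fixes N :: nat and E :: "(nat \<times> nat) set" and k :: nat
  assumes "E \<subseteq> {1..N} \<times> {1..N}"
    and "\<forall>i. (i, i) \<notin> E"
    and "strongly_connected N E"
  shows "(dec_event N E k \<longrightarrow> eps_norm1 N E (Suc k) \<le> eps_norm1 N E k - 2 * gamma k)
       \<and> (\<not> dec_event N E k \<longrightarrow> eps_norm1 N E (Suc k) = eps_norm1 N E k)"
proof -
  define V where "V = {1..N}"
  define g where "g = gamma k"
  define w where "w = wts E k"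
  define c where "c j = (if fires E w k j then g else 0)" for j
  define I where "I i = (\<Sum>j\<in>in_nbrs E i. c j)" for i
  define Ou where "Ou i = (\<Sum>j\<in>out_nbrs E i. c i)" for i
  define b where "b i = bk E k i" for i
  define b' where "b' i = bk E (Suc k) i" for i
  have fV: "finite V" unfolding V_def by simp
  have g0: "g > 0" unfolding g_def by (rule gamma_pos)
  have c0: "c j \<ge> 0" for j unfolding c_def using g0 by simp
  have inV: "in_nbrs E i \<subseteq> V" "out_nbrs E i \<subseteq> V" for i
    using assms(1) unfolding in_nbrs_def out_nbrs_def V_def by auto
  have fin: "finite (in_nbrs E i)" "finite (out_nbrs E i)" for i
    using inV[of i] finite_subset[of _ V] unfolding V_def by auto
  have I0: "I i \<ge> 0" for i unfolding I_def using c0 by (simp add: sum_nonneg)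
  have Oeq: "Ou i = real (out_deg E i) * c i" for i unfolding Ou_def out_deg_def by simp
  have upd: "b' i = b i + I i - Ou i" for i
  proof -
    have "b' i = (\<Sum>j\<in>in_nbrs E i. w (j, i) + c j) - (\<Sum>j\<in>out_nbrs E i. w (i, j) + c i)"
      unfolding b'_def bk_def imbalance_def
      by (intro arg_cong2[where f="(-)"] sum.cong) (auto simp: in_nbrs_def out_nbrs_def c_def w_def g_def)
    then show ?thesis unfolding b_def bk_def imbalance_def I_def Ou_def w_def
      by (simp add: sum.distrib)
  qed
  have swap: "(\<Sum>i\<in>V. I i) = (\<Sum>i\<in>V. Ou i)"
  proof -
    have "(\<Sum>i\<in>V. I i) = (\<Sum>i\<in>V. \<Sum>j\<in>V. if (j,i) \<in> E then c j else 0)"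
      unfolding I_def
    proof (rule sum.cong[OF refl])
      fix i
      have "in_nbrs E i = {j\<in>V. (j,i) \<in> E}" using inV(1)[of i] by (auto simp: in_nbrs_def)
      then show "(\<Sum>j\<in>in_nbrs E i. c j) = (\<Sum>j\<in>V. if (j,i) \<in> E then c j else 0)"
        using fV by (simp add: sum.inter_filter)
    qed
    also have "\<dots> = (\<Sum>j\<in>V. \<Sum>i\<in>V. if (j,i) \<in> E then c j else 0)" by (rule sum.swap)
    also have "\<dots> = (\<Sum>i\<in>V. Ou i)"
      unfolding Ou_def
    proof (rule sum.cong[OF refl])
      fix i
      have "out_nbrs E i = {j\<in>V. (i,j) \<in> E}" using inV(2)[of i] by (auto simp: out_nbrs_def)
      then show "(\<Sum>j\<in>V. if (i,j) \<in> E then c i else 0) = (\<Sum>j\<in>out_nbrs E i. c i)"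
        by (subst sum.inter_filter[OF fV, symmetric]) simp
    qed
    finally show ?thesis .
  qed
  define r where "r i = \<bar>b i\<bar> + I i - Ou i - \<bar>b' i\<bar>" for i
  have Ipos: "I i > 0 \<longleftrightarrow> (\<exists>j\<in>in_nbrs E i. fires E w k j)" for i
  proof
    assume "I i > 0"
    show "\<exists>j\<in>in_nbrs E i. fires E w k j"
    proof (rule ccontr)
      assume "\<not> (\<exists>j\<in>in_nbrs E i. fires E w k j)"
      then have "\<forall>j\<in>in_nbrs E i. c j = 0" by (auto simp: c_def)
      then have "I i = 0" by (simp add: I_def)
      with \<open>I i > 0\<close> show False by simp
    qed
  next
    assume "\<exists>j\<in>in_nbrs E i. fires E w k j"
    then obtain j where jin: "j \<in> in_nbrs E i" and "fires E w k j" by blast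
    have "c j \<le> I i" unfolding I_def by (rule member_le_sum[OF jin]) (use c0 fin in auto)
    moreover have "c j = g" using \<open>fires E w k j\<close> unfolding c_def by simp
    ultimately show "I i > 0" using g0 by linarith
  qed
  have Ige: "I i \<ge> g" if Ipi: "I i > 0" for i
  proof -
    obtain j where jin: "j \<in> in_nbrs E i" and "fires E w k j" using Ipos[of i] Ipi by blast
    have "c j \<le> I i" unfolding I_def by (rule member_le_sum[OF jin]) (use c0 fin in auto)
    moreover have "c j = g" using \<open>fires E w k j\<close> unfolding c_def by simp
    ultimately show ?thesis by linarith
  qed
  have rnode: "(b i < 0 \<and> I i > 0 \<longrightarrow> r i \<ge> 2*g) \<and> (\<not>(b i < 0 \<and> I i > 0) \<longrightarrow> r i = 0)" for i
  proof (cases "fires E w k i")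
    case True
    then have "b i \<ge> Ou i" unfolding b_def bk_def Oeq c_def fires_def w_def g_def by simp
    moreover have "Ou i \<ge> 0" unfolding Oeq using c0 by simp
    ultimately show ?thesis unfolding r_def upd using I0[of i] by auto
  next
    case False
    then have O0: "Ou i = 0" unfolding Oeq c_def by simp
    show ?thesis
    proof (cases "b i < 0 \<and> I i > 0")
      case True
      have "b i \<le> -g" using bk_neg True unfolding b_def g_def by blast
      moreover have "I i \<ge> g" using Ige True by blast
      ultimately show ?thesis unfolding r_def upd O0 using True by auto
    next
      case F: False
      then show ?thesis unfolding r_def upd O0 using I0[of i] by auto
    qed
  qed
  have r0: "r i \<ge> 0" for i using rnode[of i] g0 by (cases "b i < 0 \<and> I i > 0") auto
  have eps: "eps_norm1 N E (Suc k) = eps_norm1 N E k - (\<Sum>i\<in>V. r i)"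
  proof -
    have "(\<Sum>i\<in>V. r i) = (\<Sum>i\<in>V. \<bar>b i\<bar>) + (\<Sum>i\<in>V. I i) - (\<Sum>i\<in>V. Ou i) - (\<Sum>i\<in>V. \<bar>b' i\<bar>)"
      unfolding r_def by (simp add: sum.distrib sum_subtractf)
    then show ?thesis using swap unfolding eps_norm1_def V_def b_def b'_def by simp
  qed
  have dec: "dec_event N E k \<longleftrightarrow> (\<exists>i\<in>V. b i < 0 \<and> I i > 0)"
  proof
    assume "dec_event N E k"
    then obtain i j where "i \<in> V" "j \<in> out_nbrs E i" "nk E k i > 0" "bk E k j < 0"
      unfolding dec_event_def V_def by blast
    then show "\<exists>i\<in>V. b i < 0 \<and> I i > 0" using inV Ipos[of j]
      by (intro bexI[of _ j]) (auto simp: b_def nk_def w_def in_nbrs_def out_nbrs_def split: if_splits)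
  next
    assume "\<exists>i\<in>V. b i < 0 \<and> I i > 0"
    then obtain i where i: "i \<in> V" "b i < 0" "I i > 0" by blast
    then obtain j where j: "j \<in> in_nbrs E i" "fires E w k j" using Ipos[of i] i(3) by blast
    have "j \<in> V" using j inV by blast
    moreover have "i \<in> out_nbrs E j" using j(1) by (simp add: in_nbrs_def out_nbrs_def)
    moreover have "nk E k j > 0" using j(2) by (simp add: nk_def w_def)
    ultimately show "dec_event N E k" unfolding dec_event_def using i(2)
      by (auto simp: V_def b_def)
  qed
  show ?thesis
  proof (intro conjI impI)
    assume "dec_event N E k"
    then obtain i where i: "i \<in> V" "b i < 0" "I i > 0" using dec by blast
    have "r i \<le> (\<Sum>i\<in>V. r i)" using i r0 by (intro member_le_sum) (auto simp: V_def)
    moreover have "r i \<ge> 2*g" using rnode[of i] i by blast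
    ultimately show "eps_norm1 N E (Suc k) \<le> eps_norm1 N E k - 2 * gamma k"
      using eps unfolding g_def by linarith
  next
    assume "\<not> dec_event N E k"
    have "\<forall>i\<in>V. r i = 0"
    proof
      fix i assume "i \<in> V"
      then have "\<not> (b i < 0 \<and> I i > 0)" using dec \<open>\<not> dec_event N E k\<close> by blast
      then show "r i = 0" using rnode[of i] by blast
    qed
    then show "eps_norm1 N E (Suc k) = eps_norm1 N E k" using eps by simp
  qed
qed

end
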